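(* Let $P=(I,\emptyset,\{\omega\})$ be a reduced presentation. Then $\mathbf C_\omega$ is embeddable in $\mathbf B_\Delta$.
   Context: Wajsberg hoops: basic hoops satisfying $(x\to y)\to y\approx(y\to x)\to x$. $\mathbf{\L}_n=\Gamma(\mathbb Z,n)$ is the Wajsberg hoop on $\{0,\dots,n\}$ with $ab=\max\{a+b-n,0\}$, $a\to b=\min\{n-a+b,n\}$; $\mathbf C_\omega$ is the negative cone of $\mathbb Z$, i.e. the free monoid on one generator $c$ with $c^l\to c^m=c^{\max(l-m,0)}$. $X{\downarrow}$ = set of divisors of elements of $X$. A presentation $(I,\emptyset,\{\omega\})$ with $I$ a finite subset of $\mathbb N\setminus\{0\}$ is reduced if no $m\in I$ divides any element of $I\setminus\{m\}$. For such $P$: $\Delta=\{(k,h,2):0\le h<k\in I{\downarrow},\gcd(k,h)=1\}\cup\{(0,0,3)\}$; $\mathbf A_\Delta=\prod_{(k,h,2)\in\Delta}\mathbf{\L}_k\times\mathbf C_\omega$ (factor $\mathbf{\L}_k$ at index $(k,h,2)$, factor $\mathbf C_\omega$ at index $(0,0,3)$); $\bar g(k,h,2)=h\in\mathbf{\L}_k$, $\bar g(0,0,3)=c$; $\mathbf B_\Delta$ is the subalgebra of $\mathbf A_\Delta$ generated by $\bar g$. *)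

theory Defs
  imports Main "HOL-Library.FuncSet"
begin

record 'a hoop =
  hcarrier :: "'a set"
  hmult :: "'a \<Rightarrow> 'a \<Rightarrow> 'a"
  himp :: "'a \<Rightarrow> 'a \<Rightarrow> 'a"
  hone :: "'a"

text \<open>The Wajsberg hoop L_n on {0..n}: ab = max(a+b-n,0), a->b = min(n-a+b,n).
  Natural-number subtraction truncates at 0, which realises the max.\<close>
definition Luk :: "nat \<Rightarrow> nat hoop" where
  "Luk n = \<lparr> hcarrier = {0..n},
             hmult = (\<lambda>a b. a + b - n),
             himp = (\<lambda>a b. min (n - a + b) n),
             hone = n \<rparr>"

text \<open>C_omega: the negative cone of Z, i.e. the free monoid on one generator c.
  The element c^l is represented by its exponent l :: nat; c^l c^m = c^(l+m),
  the residuum is that of the negative cone of Z: c^l -> c^m = c^(max(m-l,0)), top = c^0.\<close>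
definition Comega :: "nat hoop" where
  "Comega = \<lparr> hcarrier = UNIV,
             hmult = (\<lambda>l m. l + m),
             himp = (\<lambda>l m. m - l),
             hone = 0 \<rparr>"

definition cgen :: nat where "cgen = 1"

definition prodH :: "'i set \<Rightarrow> ('i \<Rightarrow> 'a hoop) \<Rightarrow> ('i \<Rightarrow> 'a) hoop" where
  "prodH D F = \<lparr> hcarrier = (\<Pi>\<^sub>E i\<in>D. hcarrier (F i)),
                 hmult = (\<lambda>x y. \<lambda>i\<in>D. hmult (F i) (x i) (y i)),
                 himp = (\<lambda>x y. \<lambda>i\<in>D. himp (F i) (x i) (y i)),
                 hone = (\<lambda>i\<in>D. hone (F i)) \<rparr>"

inductive_set generated :: "'a hoop \<Rightarrow> 'a \<Rightarrow> 'a set" for H g where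
  gen_base: "g \<in> generated H g"
| gen_one: "hone H \<in> generated H g"
| gen_mult: "x \<in> generated H g \<Longrightarrow> y \<in> generated H g \<Longrightarrow> hmult H x y \<in> generated H g"
| gen_imp: "x \<in> generated H g \<Longrightarrow> y \<in> generated H g \<Longrightarrow> himp H x y \<in> generated H g"

definition subalg_gen :: "'a hoop \<Rightarrow> 'a \<Rightarrow> 'a hoop" where
  "subalg_gen H g = H \<lparr> hcarrier := generated H g \<rparr>"

definition hoop_embedding :: "('a \<Rightarrow> 'b) \<Rightarrow> 'a hoop \<Rightarrow> 'b hoop \<Rightarrow> bool" where
  "hoop_embedding f A B \<longleftrightarrow>
     f \<in> hcarrier A \<rightarrow> hcarrier B \<and> inj_on f (hcarrier A) \<and>
     f (hone A) = hone B \<and>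
     (\<forall>x\<in>hcarrier A. \<forall>y\<in>hcarrier A. f (hmult A x y) = hmult B (f x) (f y)) \<and>
     (\<forall>x\<in>hcarrier A. \<forall>y\<in>hcarrier A. f (himp A x y) = himp B (f x) (f y))"

definition embeddable :: "'a hoop \<Rightarrow> 'b hoop \<Rightarrow> bool" where
  "embeddable A B \<longleftrightarrow> (\<exists>f. hoop_embedding f A B)"

text \<open>Presentations (I, {}, {omega}): only I matters.\<close>
definition reduced_presentation :: "nat set \<Rightarrow> bool" where
  "reduced_presentation I \<longleftrightarrow> finite I \<and> 0 \<notin> I \<and>
     (\<forall>m\<in>I. \<forall>m'\<in>I - {m}. \<not> m dvd m')"

definition down :: "nat set \<Rightarrow> nat set" where
  "down X = {d. \<exists>m\<in>X. d dvd m}"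

definition Delta :: "nat set \<Rightarrow> (nat \<times> nat \<times> nat) set" where
  "Delta I = {(k, h, 2) | k h. h < k \<and> k \<in> down I \<and> gcd k h = 1} \<union> {(0, 0, 3)}"

definition factor :: "nat \<times> nat \<times> nat \<Rightarrow> nat hoop" where
  "factor i = (case i of (k, h, t) \<Rightarrow> if t = 3 then Comega else Luk k)"

definition A_Delta :: "nat set \<Rightarrow> (nat \<times> nat \<times> nat \<Rightarrow> nat) hoop" where
  "A_Delta I = prodH (Delta I) factor"

definition gbar :: "nat set \<Rightarrow> nat \<times> nat \<times> nat \<Rightarrow> nat" where
  "gbar I = (\<lambda>i\<in>Delta I. case i of (k, h, t) \<Rightarrow> if t = 3 then cgen else h)"

definition B_Delta :: "nat set \<Rightarrow> (nat \<times> nat \<times> nat \<Rightarrow> nat) hoop" where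
  "B_Delta I = subalg_gen (A_Delta I) (gbar I)"

end

theory Submission
  imports Defs
begin

fun pw :: "nat set \<Rightarrow> nat \<Rightarrow> (nat \<times> nat \<times> nat \<Rightarrow> nat)" where
  "pw I 0 = hone (A_Delta I)"
| "pw I (Suc n) = hmult (A_Delta I) (pw I n) (gbar I)"

lemma pw_gen: "pw I n \<in> generated (A_Delta I) (gbar I)"
  by (induction n) (auto intro: generated.intros)

lemma Delta_cases:
  assumes "i \<in> Delta I"
  shows "i = (0,0,3) \<or> (\<exists>k h. i = (k,h,2) \<and> h < k \<and> k \<in> down I)"
  using assms unfolding Delta_def by auto

lemma pw_C: "(0,0,3) \<in> Delta I \<and> pw I n (0,0,3) = n"
proof -
  have d: "(0,0,3) \<in> Delta I" unfolding Delta_def by auto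
  show ?thesis using d
    by (induction n) (auto simp: A_Delta_def prodH_def factor_def Comega_def gbar_def cgen_def)
qed

lemma pw_L:
  assumes "(k,h,2) \<in> Delta I" "h < k"
  shows "pw I n (k,h,2) \<le> k - n"
proof (induction n)
  case 0
  then show ?case using assms by (simp add: A_Delta_def prodH_def factor_def Luk_def)
next
  case (Suc n)
  have "pw I (Suc n) (k,h,2) = pw I n (k,h,2) + h - k"
    using assms by (simp add: A_Delta_def prodH_def factor_def Luk_def gbar_def)
  then show ?case using Suc assms by simp
qed

lemma down_bound:
  assumes "reduced_presentation I" "k \<in> down I"
  shows "k \<le> \<Sum> I"
proof -
  from assms obtain m where m: "m \<in> I" "k dvd m" unfolding down_def by auto
  have "m > 0" using assms(1) m(1) unfolding reduced_presentation_def by (metis gr0I)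
  hence "k \<le> m" using m(2) by (simp add: dvd_imp_le)
  also have "m \<le> \<Sum> I" using assms(1) m(1) unfolding reduced_presentation_def
    by (metis sum_nonneg_leq_bound order_refl zero_le)
  finally show ?thesis .
qed

definition fe :: "nat set \<Rightarrow> nat \<Rightarrow> (nat \<times> nat \<times> nat \<Rightarrow> nat)" where
  "fe I l = (\<lambda>i\<in>Delta I. if snd (snd i) = 3 then l else fst i)"

lemma fe1_gen:
  assumes "reduced_presentation I"
  shows "fe I 1 \<in> generated (A_Delta I) (gbar I)"
proof -
  define N where "N = \<Sum> I"
  have "himp (A_Delta I) (pw I N) (pw I (Suc N)) = fe I 1"
  proof (rule ext)
    fix i
    show "himp (A_Delta I) (pw I N) (pw I (Suc N)) i = fe I 1 i"
    proof (cases "i \<in> Delta I")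
      case False
      then show ?thesis by (simp add: A_Delta_def prodH_def fe_def)
    next
      case True
      then consider "i = (0,0,3)" | k h where "i = (k,h,2)" "h < k" "k \<in> down I"
        using Delta_cases by blast
      then show ?thesis
      proof cases
        case 1
        then show ?thesis using True pw_C[of I N] pw_C[of I "Suc N"]
          by (simp add: A_Delta_def prodH_def fe_def factor_def Comega_def gbar_def cgen_def)
      next
        case 2
        have kN: "k \<le> N" using down_bound[OF assms 2(3)] N_def by simp
        have a: "pw I N (k,h,2) = 0" using pw_L[of k h I N] True 2 kN by simp
        have b: "pw I (Suc N) (k,h,2) = 0" using pw_L[of k h I "Suc N"] True 2 kN by simp
        show ?thesis using True 2 a b
          by (simp add: A_Delta_def prodH_def fe_def factor_def Luk_def)
      qed
    qed
  qed
  moreover have "himp (A_Delta I) (pw I N) (pw I (Suc N)) \<in> generated (A_Delta I) (gbar I)"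
    by (rule gen_imp[OF pw_gen pw_gen])
  ultimately show ?thesis by simp
qed

lemma fe_mult: "hmult (A_Delta I) (fe I l) (fe I m) = fe I (l + m)"
  by (rule ext) (auto simp: A_Delta_def prodH_def fe_def factor_def Comega_def Luk_def
      split: prod.splits)

lemma fe_imp: "himp (A_Delta I) (fe I l) (fe I m) = fe I (m - l)"
  by (rule ext) (auto simp: A_Delta_def prodH_def fe_def factor_def Comega_def Luk_def
      split: prod.splits)

lemma fe_one: "fe I 0 = hone (A_Delta I)"
  by (rule ext) (auto simp: A_Delta_def prodH_def fe_def factor_def Comega_def Luk_def
      split: prod.splits)

lemma fe_gen:
  assumes "reduced_presentation I"
  shows "fe I l \<in> generated (A_Delta I) (gbar I)"
proof (induction l)
  case 0
  then show ?case using fe_one[of I] by (metis gen_one)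
next
  case (Suc l)
  have "hmult (A_Delta I) (fe I l) (fe I 1) \<in> generated (A_Delta I) (gbar I)"
    by (rule gen_mult[OF Suc fe1_gen[OF assms]])
  then show ?case by (simp add: fe_mult)
qed

theorem theorem3p11:
  fixes I :: "nat set"
  assumes "reduced_presentation I"
  shows "embeddable Comega (B_Delta I)"
proof -
  have inj: "inj (fe I)"
  proof (rule injI)
    fix x y assume "fe I x = fe I y"
    hence "fe I x (0,0,3) = fe I y (0,0,3)" by simp
    moreover have "(0,0,3) \<in> Delta I" using pw_C by blast
    ultimately show "x = y" by (simp add: fe_def)
  qed
  have "hoop_embedding (fe I) Comega (B_Delta I)"
    unfolding hoop_embedding_def B_Delta_def subalg_gen_def
    using inj fe_gen[OF assms] fe_mult fe_imp fe_one
    by (auto simp: Comega_def)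
  thus ?thesis unfolding embeddable_def by blast
qed

end
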